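(* Let $G=(V,E)$ be a graph whose vertex set is partitioned into three (possibly empty) cliques $Q_1,Q_2,Q_3$ such that: (a) for all $i\neq j$, each vertex of $Q_i$ is adjacent to at most one vertex of $Q_j$; (b) for distinct $i,j,k$, if a vertex of $Q_i$ is adjacent to $b\in Q_j$ and to $c\in Q_k$, then $bc\in E$; (c) for each $i\in\{1,2,3\}$ there is a finite set of colours $L_i$ such that (i) every vertex $v\in Q_i$ has list $L(v)=L_i$, (ii) $|L_i|\ge |Q_i|$, (iii) there are colours $d_1\in L_1$, $d_2\in L_2$, $d_3\in L_3$ that are pairwise distinct, and (iv) no colour belongs to all three of $L_1,L_2,L_3$. Then $G$ admits an $L$-colouring, i.e., a proper vertex colouring in which every vertex $v$ receives a colour from $L(v)$. *)

theory Defs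
  imports Main
begin

definition simple_graph :: "'v set \<Rightarrow> ('v \<Rightarrow> 'v \<Rightarrow> bool) \<Rightarrow> bool" where
  "simple_graph V E \<longleftrightarrow> finite V \<and> (\<forall>u v. E u v \<longrightarrow> E v u) \<and> (\<forall>v. \<not> E v v)
     \<and> (\<forall>u v. E u v \<longrightarrow> u \<in> V \<and> v \<in> V)"

definition is_clique :: "'v set \<Rightarrow> ('v \<Rightarrow> 'v \<Rightarrow> bool) \<Rightarrow> 'v set \<Rightarrow> bool" where
  "is_clique V E Q \<longleftrightarrow> Q \<subseteq> V \<and> (\<forall>x\<in>Q. \<forall>y\<in>Q. x \<noteq> y \<longrightarrow> E x y)"

definition is_L_colouring :: "'v set \<Rightarrow> ('v \<Rightarrow> 'v \<Rightarrow> bool) \<Rightarrow> ('v \<Rightarrow> 'c set) \<Rightarrow> ('v \<Rightarrow> 'c) \<Rightarrow> bool" where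
  "is_L_colouring V E Lst col \<longleftrightarrow> (\<forall>v\<in>V. col v \<in> Lst v)
     \<and> (\<forall>u\<in>V. \<forall>v\<in>V. E u v \<longrightarrow> col u \<noteq> col v)"

end

theory Submission
  imports Defs
begin

lemma core:
  assumes m1: "cA \<or> pA \<longrightarrow> dA \<in> LA" and m2: "cB \<or> pB \<longrightarrow> dB \<in> LB" and m3: "cC \<or> pC \<longrightarrow> dC \<in> LC"
  and e1: "cA \<and> pA \<longrightarrow> eA \<in> LA \<and> eA \<noteq> dA"
  and e2: "cB \<and> pB \<longrightarrow> eB \<in> LB \<and> eB \<noteq> dB"
  and e3: "cC \<and> pC \<longrightarrow> eC \<in> LC \<and> eC \<noteq> dC"
  and d12: "(cA \<or> pA) \<and> (cB \<or> pB) \<longrightarrow> dA \<noteq> dB"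
  and d13: "(cA \<or> pA) \<and> (cC \<or> pC) \<longrightarrow> dA \<noteq> dC"
  and d23: "(cB \<or> pB) \<and> (cC \<or> pC) \<longrightarrow> dB \<noteq> dC"
  and nc: "\<forall>x. x \<in> LA \<longrightarrow> x \<in> LB \<longrightarrow> x \<notin> LC"
  shows "\<exists>s1 s2 s3. (cA \<and> \<not>pA \<longrightarrow> \<not>s1) \<and> (pA \<and> \<not>cA \<longrightarrow> s1)
    \<and> (cB \<and> \<not>pB \<longrightarrow> \<not>s2) \<and> (pB \<and> \<not>cB \<longrightarrow> s2)
    \<and> (cC \<and> \<not>pC \<longrightarrow> \<not>s3) \<and> (pC \<and> \<not>cC \<longrightarrow> s3)
    \<and> (cA \<and> cB \<longrightarrow> (if s1 then eA else dA) \<noteq> (if s2 then eB else dB))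
    \<and> (cA \<and> cC \<longrightarrow> (if s1 then eA else dA) \<noteq> (if s3 then eC else dC))
    \<and> (cB \<and> cC \<longrightarrow> (if s2 then eB else dB) \<noteq> (if s3 then eC else dC))
    \<and> (pA \<and> pB \<longrightarrow> (if s1 then dA else eA) \<noteq> (if s2 then dB else eB))
    \<and> (pA \<and> pC \<longrightarrow> (if s1 then dA else eA) \<noteq> (if s3 then dC else eC))
    \<and> (pB \<and> pC \<longrightarrow> (if s2 then dB else eB) \<noteq> (if s3 then dC else eC))"
  unfolding ex_bool_eq using assms
  by (smt (verit))

lemma core_idx:
  fixes cI dP :: "nat \<Rightarrow> bool" and d e :: "nat \<Rightarrow> 'c" and L :: "nat \<Rightarrow> 'c set"
  assumes m: "\<forall>j\<in>{1,2,3}. cI j \<or> dP j \<longrightarrow> d j \<in> L j"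
  and e: "\<forall>j\<in>{1,2,3}. cI j \<and> dP j \<longrightarrow> e j \<in> L j \<and> e j \<noteq> d j"
  and dd: "\<forall>j\<in>{1,2,3}. \<forall>l\<in>{1,2,3}. j \<noteq> l \<and> (cI j \<or> dP j) \<and> (cI l \<or> dP l) \<longrightarrow> d j \<noteq> d l"
  and nc: "L 1 \<inter> L 2 \<inter> L 3 = {}"
  shows "\<exists>s. (\<forall>j\<in>{1,2,3}. (cI j \<and> \<not> dP j \<longrightarrow> \<not> s j) \<and> (dP j \<and> \<not> cI j \<longrightarrow> s j))
    \<and> (\<forall>j\<in>{1,2,3}. \<forall>l\<in>{1,2,3}. j \<noteq> l \<longrightarrow>
         (cI j \<and> cI l \<longrightarrow> (if s j then e j else d j) \<noteq> (if s l then e l else d l))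
       \<and> (dP j \<and> dP l \<longrightarrow> (if s j then d j else e j) \<noteq> (if s l then d l else e l)))"
proof -
  have nc': "\<forall>x. x \<in> L 1 \<longrightarrow> x \<in> L 2 \<longrightarrow> x \<notin> L 3" using nc by auto
  have "\<exists>s1 s2 s3. (cI 1 \<and> \<not>dP 1 \<longrightarrow> \<not>s1) \<and> (dP 1 \<and> \<not>cI 1 \<longrightarrow> s1)
    \<and> (cI 2 \<and> \<not>dP 2 \<longrightarrow> \<not>s2) \<and> (dP 2 \<and> \<not>cI 2 \<longrightarrow> s2)
    \<and> (cI 3 \<and> \<not>dP 3 \<longrightarrow> \<not>s3) \<and> (dP 3 \<and> \<not>cI 3 \<longrightarrow> s3)
    \<and> (cI 1 \<and> cI 2 \<longrightarrow> (if s1 then e 1 else d 1) \<noteq> (if s2 then e 2 else d 2))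
    \<and> (cI 1 \<and> cI 3 \<longrightarrow> (if s1 then e 1 else d 1) \<noteq> (if s3 then e 3 else d 3))
    \<and> (cI 2 \<and> cI 3 \<longrightarrow> (if s2 then e 2 else d 2) \<noteq> (if s3 then e 3 else d 3))
    \<and> (dP 1 \<and> dP 2 \<longrightarrow> (if s1 then d 1 else e 1) \<noteq> (if s2 then d 2 else e 2))
    \<and> (dP 1 \<and> dP 3 \<longrightarrow> (if s1 then d 1 else e 1) \<noteq> (if s3 then d 3 else e 3))
    \<and> (dP 2 \<and> dP 3 \<longrightarrow> (if s2 then d 2 else e 2) \<noteq> (if s3 then d 3 else e 3))"
    apply (rule core[where LA="L 1" and LB="L 2" and LC="L 3"])
    subgoal using m by simp
    subgoal using m by simp
    subgoal using m by simp
    subgoal using e by simp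
    subgoal using e by simp
    subgoal using e by simp
    subgoal using dd by simp
    subgoal using dd by simp
    subgoal using dd by simp
    subgoal using nc' by simp
    done
  then obtain s1 s2 s3 where S: "(cI 1 \<and> \<not>dP 1 \<longrightarrow> \<not>s1) \<and> (dP 1 \<and> \<not>cI 1 \<longrightarrow> s1)
    \<and> (cI 2 \<and> \<not>dP 2 \<longrightarrow> \<not>s2) \<and> (dP 2 \<and> \<not>cI 2 \<longrightarrow> s2)
    \<and> (cI 3 \<and> \<not>dP 3 \<longrightarrow> \<not>s3) \<and> (dP 3 \<and> \<not>cI 3 \<longrightarrow> s3)
    \<and> (cI 1 \<and> cI 2 \<longrightarrow> (if s1 then e 1 else d 1) \<noteq> (if s2 then e 2 else d 2))
    \<and> (cI 1 \<and> cI 3 \<longrightarrow> (if s1 then e 1 else d 1) \<noteq> (if s3 then e 3 else d 3))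
    \<and> (cI 2 \<and> cI 3 \<longrightarrow> (if s2 then e 2 else d 2) \<noteq> (if s3 then e 3 else d 3))
    \<and> (dP 1 \<and> dP 2 \<longrightarrow> (if s1 then d 1 else e 1) \<noteq> (if s2 then d 2 else e 2))
    \<and> (dP 1 \<and> dP 3 \<longrightarrow> (if s1 then d 1 else e 1) \<noteq> (if s3 then d 3 else e 3))
    \<and> (dP 2 \<and> dP 3 \<longrightarrow> (if s2 then d 2 else e 2) \<noteq> (if s3 then d 3 else e 3))" by (elim exE)
  show ?thesis
    apply (rule exI[of _ "\<lambda>j. if j = 1 then s1 else if j = 2 then s2 else s3"])
    using S apply (simp only: ball_simps insert_iff empty_iff simp_thms if_True if_False numeral_eq_iff num.distinct num.inject One_nat_def)
    by (smt (verit))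
qed

lemma gen:
  fixes E :: "'v \<Rightarrow> 'v \<Rightarrow> bool" and Q :: "nat \<Rightarrow> 'v set" and L :: "nat \<Rightarrow> 'c set" and d :: "nat \<Rightarrow> 'c"
  assumes sym: "\<forall>u v. E u v \<longrightarrow> E v u" and irr: "\<forall>v. \<not> E v v"
  and finQ: "\<forall>i\<in>{1,2,3}. finite (Q i)"
  and disj: "\<forall>i\<in>{1,2,3}. \<forall>j\<in>{1,2,3}. i \<noteq> j \<longrightarrow> Q i \<inter> Q j = {}"
  and cl: "\<forall>i\<in>{1,2,3}. \<forall>x\<in>Q i. \<forall>y\<in>Q i. x \<noteq> y \<longrightarrow> E x y"
  and a: "\<forall>i\<in>{1,2,3}. \<forall>j\<in>{1,2,3}. i \<noteq> j \<longrightarrow>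
              (\<forall>v\<in>Q i. \<forall>b\<in>Q j. \<forall>c\<in>Q j. E v b \<and> E v c \<longrightarrow> b = c)"
  and b: "\<forall>i\<in>{1,2,3}. \<forall>j\<in>{1,2,3}. \<forall>k\<in>{1,2,3}. i \<noteq> j \<and> j \<noteq> k \<and> i \<noteq> k \<longrightarrow>
              (\<forall>v\<in>Q i. \<forall>b\<in>Q j. \<forall>c\<in>Q k. E v b \<and> E v c \<longrightarrow> E b c)"
  and fin: "\<forall>i\<in>{1,2,3}. finite (L i)"
  and size: "\<forall>i\<in>{1,2,3}. card (Q i) \<le> card (L i)"
  and dm: "\<forall>i\<in>{1,2,3}. Q i \<noteq> {} \<longrightarrow> d i \<in> L i"
  and dd: "\<forall>i\<in>{1,2,3}. \<forall>j\<in>{1,2,3}. i \<noteq> j \<and> Q i \<noteq> {} \<and> Q j \<noteq> {} \<longrightarrow> d i \<noteq> d j"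
  and nc: "L 1 \<inter> L 2 \<inter> L 3 = {}"
  shows "\<exists>col. (\<forall>i\<in>{1,2,3}. \<forall>v\<in>Q i. col v \<in> L i)
     \<and> (\<forall>i\<in>{1,2,3}. \<forall>j\<in>{1,2,3}. \<forall>u\<in>Q i. \<forall>v\<in>Q j. E u v \<longrightarrow> col u \<noteq> col v)"
  using finQ disj cl a b fin size dm dd nc
proof (induction "card (Q 1 \<union> Q 2 \<union> Q 3)" arbitrary: Q L d rule: less_induct)
  case less
  note finQ = less.prems(1) and disj = less.prems(2) and cl = less.prems(3) and a = less.prems(4)
    and b = less.prems(5) and fin = less.prems(6) and size = less.prems(7) and dm = less.prems(8)
    and dd = less.prems(9) and nc = less.prems(10)
  show ?case
  proof (cases "Q 1 \<union> Q 2 \<union> Q 3 = {}")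
    case True
    then show ?thesis by auto
  next
    case False
    then obtain i v where i: "i \<in> {1,2,3}" and v: "v \<in> Q i" by auto
    define K where "K = {v} \<union> {u. \<exists>j\<in>{1,2,3}. j \<noteq> i \<and> u \<in> Q j \<and> E v u}"
    have vK: "v \<in> K" unfolding K_def by auto
    have K1: "\<forall>j\<in>{1,2,3}. \<forall>x\<in>K \<inter> Q j. \<forall>y\<in>K \<inter> Q j. x = y"
    proof (intro ballI)
      fix j x y assume j: "j \<in> {1,2,3}" and x: "x \<in> K \<inter> Q j" and y: "y \<in> K \<inter> Q j"
      show "x = y"
      proof (cases "j = i")
        case True
        have "x = v" using x True disj i unfolding K_def by blast
        moreover have "y = v" using y True disj i unfolding K_def by blast
        ultimately show ?thesis by simp
      next
        case False
        have "x \<noteq> v" using x v False disj i j by blast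
        hence Ex: "E v x" using x unfolding K_def by auto
        have "y \<noteq> v" using y v False disj i j by blast
        hence Ey: "E v y" using y unfolding K_def by auto
        show ?thesis using a[rule_format, OF i j _ v, of x y] False x y Ex Ey by blast
      qed
    qed
    have K3: "\<forall>j\<in>{1,2,3}. \<forall>l\<in>{1,2,3}. \<forall>u\<in>Q j. \<forall>k\<in>K \<inter> Q l. u \<notin> K \<longrightarrow> E u k \<longrightarrow> j = l"
    proof (intro ballI impI)
      fix j l u k assume j: "j \<in> {1,2,3}" and l: "l \<in> {1,2,3}" and u: "u \<in> Q j" and k: "k \<in> K \<inter> Q l"
        and uK: "u \<notin> K" and Euk: "E u k"
      show "j = l"
      proof (rule ccontr)
        assume jl: "j \<noteq> l"
        show False
        proof (cases "k = v")
          case True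
          have li: "l = i" using True k v disj i l by blast
          have "E v u" using sym Euk True by blast
          moreover have "j \<noteq> i" using jl li by simp
          ultimately have "u \<in> K" using u j unfolding K_def by blast
          then show False using uK by simp
        next
          case False
          then obtain j' where j': "j' \<in> {1,2,3}" "j' \<noteq> i" "k \<in> Q j'" "E v k" using k unfolding K_def by blast
          have "j' = l" using j' k l disj by blast
          with j' have li: "l \<noteq> i" by simp
          have Eku: "E k u" and Ekv: "E k v" using sym Euk j' by blast+
          show False
          proof (cases "j = i")
            case True
            have "u \<noteq> v" using uK vK by blast
            moreover have "u = v" using a[rule_format, OF l i _ _ _ _, of k u v] li k u v True Eku Ekv by blast
            ultimately show False by simp
          next
            case False
            have "E v u" using b[rule_format, OF l i j _, of k v u] li False jl k v u Eku Ekv by blast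
            hence "u \<in> K" using u j False unfolding K_def by blast
            then show False using uK by simp
          qed
        qed
      qed
    qed
    have Ksub: "K \<subseteq> Q 1 \<union> Q 2 \<union> Q 3" using i v unfolding K_def by auto
    define cI where "cI j = (K \<inter> Q j \<noteq> {})" for j
    define dP where "dP j = (Q j - K \<noteq> {})" for j
    define e where "e j = (SOME x. x \<in> L j \<and> x \<noteq> d j)" for j
    have he: "\<forall>j\<in>{1,2,3}. cI j \<and> dP j \<longrightarrow> e j \<in> L j \<and> e j \<noteq> d j"
    proof (intro ballI impI)
      fix j assume j: "j \<in> {1,2,3}" and cd: "cI j \<and> dP j"
      obtain x y where x: "x \<in> K \<inter> Q j" and y: "y \<in> Q j - K" using cd unfolding cI_def dP_def by blast
      have "{x, y} \<subseteq> Q j" using x y by blast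
      moreover have "x \<noteq> y" using x y by blast
      hence "card {x, y} = 2" by simp
      ultimately have "2 \<le> card (Q j)" using finQ j by (metis card_mono)
      moreover have "card (Q j) \<le> card (L j)" using size j by blast
      ultimately have c2: "2 \<le> card (L j)" by linarith
      have "\<exists>z. z \<in> L j \<and> z \<noteq> d j"
      proof (rule ccontr)
        assume "\<not> (\<exists>z. z \<in> L j \<and> z \<noteq> d j)"
        hence "L j \<subseteq> {d j}" by blast
        hence "card (L j) \<le> 1" by (metis card.empty card.insert card_mono empty_iff finite.emptyI finite.insertI le_zero_eq One_nat_def card_le_Suc0_iff_eq finite_subset)
        thus False using c2 by simp
      qed
      then show "e j \<in> L j \<and> e j \<noteq> d j" unfolding e_def by (rule someI_ex)
    qed
    have hm: "\<forall>j\<in>{1,2,3}. cI j \<or> dP j \<longrightarrow> d j \<in> L j"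
      using dm unfolding cI_def dP_def by blast
    have hd: "\<forall>j\<in>{1,2,3}. \<forall>l\<in>{1,2,3}. j \<noteq> l \<and> (cI j \<or> dP j) \<and> (cI l \<or> dP l) \<longrightarrow> d j \<noteq> d l"
      using dd unfolding cI_def dP_def by blast
    obtain s where s1: "\<forall>j\<in>{1,2,3}. (cI j \<and> \<not> dP j \<longrightarrow> \<not> s j) \<and> (dP j \<and> \<not> cI j \<longrightarrow> s j)"
      and s2: "\<forall>j\<in>{1,2,3}. \<forall>l\<in>{1,2,3}. j \<noteq> l \<longrightarrow>
         (cI j \<and> cI l \<longrightarrow> (if s j then e j else d j) \<noteq> (if s l then e l else d l))
       \<and> (dP j \<and> dP l \<longrightarrow> (if s j then d j else e j) \<noteq> (if s l then d l else e l))"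
      using core_idx[OF hm he hd nc] by blast
    define c where "c j = (if s j then e j else d j)" for j
    define d' where "d' j = (if s j then d j else e j)" for j
    define Q' where "Q' j = Q j - K" for j
    define L' where "L' j = (if cI j then L j - {c j} else L j)" for j
    have cL: "\<forall>j\<in>{1,2,3}. cI j \<longrightarrow> c j \<in> L j"
      using s1 he hm unfolding c_def by metis
    have cne: "\<forall>j\<in>{1,2,3}. cI j \<and> dP j \<longrightarrow> c j \<noteq> d' j"
      using he unfolding c_def d'_def by auto
    have dL: "\<forall>j\<in>{1,2,3}. dP j \<longrightarrow> d' j \<in> L' j"
    proof (intro ballI impI)
      fix j :: nat assume j: "j \<in> {1,2,3}" and dPj: "dP j"
      have dj: "d j \<in> L j" using hm j dPj by blast
      show "d' j \<in> L' j"
      proof (cases "s j")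
        case True
        show ?thesis
        proof (cases "cI j")
          case c: True
          have "e j \<noteq> d j" using he j dPj c by blast
          thus ?thesis using True c dj unfolding d'_def L'_def c_def by simp
        next
          case False
          thus ?thesis using True dj unfolding d'_def L'_def by simp
        qed
      next
        case False
        have c: "cI j" using s1 j dPj False by blast
        have "e j \<in> L j \<and> e j \<noteq> d j" using he j dPj c by blast
        thus ?thesis using False c unfolding d'_def L'_def c_def by simp
      qed
    qed
    obtain col where col1: "\<forall>i\<in>{1,2,3}. \<forall>v\<in>Q' i. col v \<in> L' i"
      and col2: "\<forall>i\<in>{1,2,3}. \<forall>j\<in>{1,2,3}. \<forall>u\<in>Q' i. \<forall>v\<in>Q' j. E u v \<longrightarrow> col u \<noteq> col v"
    proof -
      have "\<exists>col. (\<forall>i\<in>{1,2,3}. \<forall>v\<in>Q' i. col v \<in> L' i)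
         \<and> (\<forall>i\<in>{1,2,3}. \<forall>j\<in>{1,2,3}. \<forall>u\<in>Q' i. \<forall>v\<in>Q' j. E u v \<longrightarrow> col u \<noteq> col v)"
      proof (rule less.hyps)
        show "card (Q' 1 \<union> Q' 2 \<union> Q' 3) < card (Q 1 \<union> Q 2 \<union> Q 3)"
        proof (rule psubset_card_mono)
          show "finite (Q 1 \<union> Q 2 \<union> Q 3)" using finQ by simp
          show "Q' 1 \<union> Q' 2 \<union> Q' 3 \<subset> Q 1 \<union> Q 2 \<union> Q 3"
            using vK v i unfolding Q'_def by blast
        qed
        show "\<forall>i\<in>{1,2,3}. finite (Q' i)" using finQ unfolding Q'_def by auto
        show "\<forall>i\<in>{1,2,3}. \<forall>j\<in>{1,2,3}. i \<noteq> j \<longrightarrow> Q' i \<inter> Q' j = {}" using disj unfolding Q'_def by auto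
        show "\<forall>i\<in>{1,2,3}. \<forall>x\<in>Q' i. \<forall>y\<in>Q' i. x \<noteq> y \<longrightarrow> E x y" using cl unfolding Q'_def by auto
        show "\<forall>i\<in>{1,2,3}. \<forall>j\<in>{1,2,3}. i \<noteq> j \<longrightarrow>
              (\<forall>v\<in>Q' i. \<forall>b\<in>Q' j. \<forall>c\<in>Q' j. E v b \<and> E v c \<longrightarrow> b = c)"
          using a unfolding Q'_def by blast
        show "\<forall>i\<in>{1,2,3}. \<forall>j\<in>{1,2,3}. \<forall>k\<in>{1,2,3}. i \<noteq> j \<and> j \<noteq> k \<and> i \<noteq> k \<longrightarrow>
              (\<forall>v\<in>Q' i. \<forall>b\<in>Q' j. \<forall>c\<in>Q' k. E v b \<and> E v c \<longrightarrow> E b c)"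
          using b unfolding Q'_def by blast
        show "\<forall>i\<in>{1,2,3}. finite (L' i)" using fin unfolding L'_def by auto
        show "\<forall>i\<in>{1,2,3}. card (Q' i) \<le> card (L' i)"
        proof
          fix j :: nat assume j: "j \<in> {1,2,3}"
          show "card (Q' j) \<le> card (L' j)"
          proof (cases "cI j")
            case True
            then obtain k where k: "k \<in> K \<inter> Q j" unfolding cI_def by blast
            have "Q' j = Q j - {k}" using K1 j k unfolding Q'_def by blast
            hence "card (Q' j) = card (Q j) - 1" using k by simp
            moreover have "c j \<in> L j" using True cL j by blast
            hence "card (L' j) = card (L j) - 1" using True unfolding L'_def by simp
            moreover have "card (Q j) \<le> card (L j)" using size j by blast
            ultimately show ?thesis by simp
          next
            case False
            hence "Q' j = Q j" "L' j = L j" unfolding Q'_def L'_def cI_def by auto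
            moreover have "card (Q j) \<le> card (L j)" using size j by blast
            ultimately show ?thesis by simp
          qed
        qed
        show "\<forall>i\<in>{1,2,3}. Q' i \<noteq> {} \<longrightarrow> d' i \<in> L' i"
          using dL unfolding Q'_def dP_def by blast
        show "\<forall>i\<in>{1,2,3}. \<forall>j\<in>{1,2,3}. i \<noteq> j \<and> Q' i \<noteq> {} \<and> Q' j \<noteq> {} \<longrightarrow> d' i \<noteq> d' j"
          using s2 unfolding Q'_def dP_def d'_def by blast
        show "L' 1 \<inter> L' 2 \<inter> L' 3 = {}" using nc unfolding L'_def by auto
      qed
      then show ?thesis using that by blast
    qed
    define ci where "ci u = (if u \<in> Q 1 then c 1 else if u \<in> Q 2 then c 2 else c 3)" for u
    have cidx: "\<forall>j\<in>{1,2,3}. \<forall>u\<in>Q j. ci u = c j"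
      using disj unfolding ci_def by auto
    define col' where "col' u = (if u \<in> K then ci u else col u)" for u
    show ?thesis
    proof (rule exI[of _ col'], intro conjI ballI impI)
      fix j u assume j: "j \<in> {1,2,3}" and u: "u \<in> Q j"
      show "col' u \<in> L j"
      proof (cases "u \<in> K")
        case True
        hence "cI j" using u unfolding cI_def by blast
        hence "c j \<in> L j" using cL j by blast
        moreover have "ci u = c j" using cidx j u by blast
        ultimately show ?thesis using True unfolding col'_def by simp
      next
        case False
        hence "u \<in> Q' j" using u unfolding Q'_def by simp
        hence "col u \<in> L' j" using col1 j by blast
        thus ?thesis using False unfolding col'_def L'_def by (auto split: if_splits)
      qed
    next
      fix j l u w assume j: "j \<in> {1,2,3}" and l: "l \<in> {1,2,3}" and u: "u \<in> Q j" and w: "w \<in> Q l"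
        and E: "E u w"
      show "col' u \<noteq> col' w"
      proof (cases "u \<in> K"; cases "w \<in> K")
        assume uK: "u \<in> K" and wK: "w \<in> K"
        show ?thesis
        proof (cases "j = l")
          case True
          hence "u = w" using K1 j u w uK wK by blast
          thus ?thesis using E irr by simp
        next
          case False
          have "cI j" "cI l" using uK wK u w unfolding cI_def by blast+
          hence "c j \<noteq> c l" using s2 j l False unfolding c_def by blast
          moreover have "ci u = c j" "ci w = c l" using cidx j l u w by blast+
          ultimately show ?thesis using uK wK unfolding col'_def by simp
        qed
      next
        assume uK: "u \<in> K" and wK: "w \<notin> K"
        have "l = j" using K3 l j w u uK wK sym E by blast
        have cj: "cI j" using uK u unfolding cI_def by blast
        have "w \<in> Q' j" using w wK \<open>l = j\<close> unfolding Q'_def by simp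
        hence "col w \<in> L' j" using col1 j by blast
        hence "col w \<noteq> c j" using cj unfolding L'_def by simp
        moreover have "ci u = c j" using cidx j u by blast
        ultimately show ?thesis using uK wK unfolding col'_def by simp
      next
        assume uK: "u \<notin> K" and wK: "w \<in> K"
        have "j = l" using K3 l j w u uK wK E by blast
        have cl': "cI l" using wK w unfolding cI_def by blast
        have "u \<in> Q' l" using u uK \<open>j = l\<close> unfolding Q'_def by simp
        hence "col u \<in> L' l" using col1 l by blast
        hence "col u \<noteq> c l" using cl' unfolding L'_def by simp
        moreover have "ci w = c l" using cidx l w by blast
        ultimately show ?thesis using uK wK unfolding col'_def by simp
      next
        assume uK: "u \<notin> K" and wK: "w \<notin> K"
        have "u \<in> Q' j" "w \<in> Q' l" using u w uK wK unfolding Q'_def by simp_all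
        hence "col u \<noteq> col w" using col2 j l E by blast
        thus ?thesis using uK wK unfolding col'_def by simp
      qed
    qed
  qed
qed

theorem mainTheorem3:
  fixes V :: "'v set" and E :: "'v \<Rightarrow> 'v \<Rightarrow> bool"
    and Q :: "nat \<Rightarrow> 'v set" and L :: "nat \<Rightarrow> 'c set" and Lst :: "'v \<Rightarrow> 'c set"
    and d :: "nat \<Rightarrow> 'c"
  assumes graph: "simple_graph V E"
    and cover: "V = Q 1 \<union> Q 2 \<union> Q 3"
    and disj: "\<forall>i\<in>{1,2,3}. \<forall>j\<in>{1,2,3}. i \<noteq> j \<longrightarrow> Q i \<inter> Q j = {}"
    and cliques: "\<forall>i\<in>{1,2,3}. is_clique V E (Q i)"
    and a: "\<forall>i\<in>{1,2,3}. \<forall>j\<in>{1,2,3}. i \<noteq> j \<longrightarrow>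
              (\<forall>v\<in>Q i. \<forall>b\<in>Q j. \<forall>c\<in>Q j. E v b \<and> E v c \<longrightarrow> b = c)"
    and b: "\<forall>i\<in>{1,2,3}. \<forall>j\<in>{1,2,3}. \<forall>k\<in>{1,2,3}. i \<noteq> j \<and> j \<noteq> k \<and> i \<noteq> k \<longrightarrow>
              (\<forall>v\<in>Q i. \<forall>b\<in>Q j. \<forall>c\<in>Q k. E v b \<and> E v c \<longrightarrow> E b c)"
    and lists: "\<forall>i\<in>{1,2,3}. \<forall>v\<in>Q i. Lst v = L i"
    and fin: "\<forall>i\<in>{1,2,3}. finite (L i)"
    and size: "\<forall>i\<in>{1,2,3}. card (Q i) \<le> card (L i)"
    and dmem: "\<forall>i\<in>{1,2,3}. d i \<in> L i"
    and ddist: "d 1 \<noteq> d 2 \<and> d 1 \<noteq> d 3 \<and> d 2 \<noteq> d 3"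
    and nocommon: "L 1 \<inter> L 2 \<inter> L 3 = {}"
  shows "\<exists>col. is_L_colouring V E Lst col"
  proof -
  have finV: "finite V" and sym: "\<forall>u v. E u v \<longrightarrow> E v u" and irr: "\<forall>v. \<not> E v v"
    using graph unfolding simple_graph_def by auto
  have finQ: "\<forall>i\<in>{1,2,3}. finite (Q i)" using finV cover by (auto intro: finite_subset)
  have cl: "\<forall>i\<in>{1,2,3}. \<forall>x\<in>Q i. \<forall>y\<in>Q i. x \<noteq> y \<longrightarrow> E x y"
    using cliques unfolding is_clique_def by blast
  have dm: "\<forall>i\<in>{1,2,3}. Q i \<noteq> {} \<longrightarrow> d i \<in> L i" using dmem by blast
  have dd: "\<forall>i\<in>{1,2,3}. \<forall>j\<in>{1,2,3}. i \<noteq> j \<and> Q i \<noteq> {} \<and> Q j \<noteq> {} \<longrightarrow> d i \<noteq> d j"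
    using ddist by auto
  obtain col where c1: "\<forall>i\<in>{1,2,3}. \<forall>v\<in>Q i. col v \<in> L i"
     and c2: "\<forall>i\<in>{1,2,3}. \<forall>j\<in>{1,2,3}. \<forall>u\<in>Q i. \<forall>v\<in>Q j. E u v \<longrightarrow> col u \<noteq> col v"
    using gen[OF sym irr finQ disj cl a b fin size dm dd nocommon] by blast
  have "is_L_colouring V E Lst col"
    unfolding is_L_colouring_def
  proof (intro conjI ballI impI)
    fix v assume "v \<in> V"
    then obtain i where i: "i \<in> {1,2,3}" "v \<in> Q i" using cover by auto
    then have "Lst v = L i" using lists by blast
    moreover have "col v \<in> L i" using c1 i by blast
    ultimately show "col v \<in> Lst v" by simp
  next
    fix u v assume "u \<in> V" "v \<in> V" "E u v"
    moreover obtain i where i: "i \<in> {1,2,3}" "u \<in> Q i" using cover \<open>u \<in> V\<close> by auto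
    moreover obtain j where j: "j \<in> {1,2,3}" "v \<in> Q j" using cover \<open>v \<in> V\<close> by auto
    ultimately show "col u \<noteq> col v" using c2 by blast
  qed
  then show ?thesis by blast
qed

end
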